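(* Let $N>1$ and let the parameter space $\Theta$ of the correlated Bernoulli random graph model be nondegenerate. Then there does not exist an unbiased estimator of the total correlation $\varrho_T$, i.e. there is no statistic $S:\mathcal{X}\to\mathbb{R}$ with $\mathbb{E}_\theta(S)=\varrho_T(\theta)$ for all $\theta\in\Theta$.
   Context: Correlated Bernoulli random graph model: fix a positive integer $N$ and let $\mathcal{R}=\{(p_1,\dots,p_N,\varrho_1,\dots,\varrho_N): p_i,\varrho_i\in[0,1]\}$; a parameter space is any $\Theta\subseteq\mathcal{R}$. For $\theta\in\Theta$, the pairs $(X_i,Y_i)$, $i=1,\dots,N$, of $\{0,1\}$-valued random variables are independent, $X_i,Y_i$ are marginally Bernoulli$(p_i)$ with Pearson correlation $\varrho_i$ (so $\mathbb{P}(X_i=Y_i=1)=p_i^2+\varrho_ip_i(1-p_i)$, $\mathbb{P}(X_i=Y_i=0)=(1-p_i)^2+\varrho_ip_i(1-p_i)$, $\mathbb{P}(X_i=1,Y_i=0)=\mathbb{P}(X_i=0,Y_i=1)=(1-\varrho_i)p_i(1-p_i)$). Sample space $\mathcal{X}=\{(x,y):x,y\in\{0,1\}^N\}$. Let $\mathcal{R}^o=\{(p_1,\dots,p_N,0,\dots,0):p_i\in\mathbb{R}\}$; $\Theta$ is nondegenerate if $\Theta\cap\mathcal{R}^o$ has an interior point relative to $\mathcal{R}^o$. Let $\mu=\frac1N\sum_i p_i$. The total correlation is $\varrho_T=1-\frac{\sum_{i=1}^N(1-\varrho_i)p_i(1-p_i)}{N\mu(1-\mu)}$ when $0<\mu<1$;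 when $\mu\in\{0,1\}$ it is defined by an arbitrary convention with value in $[0,1]$. *)

theory Defs
  imports "HOL-Analysis.Analysis"
begin

text \<open>Parameters theta = (p, rho) with p, rho :: real^'n, N = CARD('n).
  An observation is a pair (x, y) of functions 'n \<Rightarrow> bool (True = 1).\<close>

definition cb_param_space :: "((real^'n) \<times> (real^'n)) set" where
  "cb_param_space = {(p, r). \<forall>i. 0 \<le> p$i \<and> p$i \<le> 1 \<and> 0 \<le> r$i \<and> r$i \<le> 1}"

definition cb_joint :: "real \<Rightarrow> real \<Rightarrow> bool \<Rightarrow> bool \<Rightarrow> real" where
  "cb_joint p r a b =
     (if a \<and> b then p^2 + r * p * (1 - p)
      else if \<not> a \<and> \<not> b then (1 - p)^2 + r * p * (1 - p)
      else (1 - r) * p * (1 - p))"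

definition cb_prob :: "(real^'n) \<times> (real^'n) \<Rightarrow> ('n \<Rightarrow> bool) \<Rightarrow> ('n \<Rightarrow> bool) \<Rightarrow> real" where
  "cb_prob \<theta> x y = (\<Prod>i\<in>UNIV. cb_joint (fst \<theta> $ i) (snd \<theta> $ i) (x i) (y i))"

definition cb_expect :: "(real^'n) \<times> (real^'n) \<Rightarrow> (('n \<Rightarrow> bool) \<Rightarrow> ('n \<Rightarrow> bool) \<Rightarrow> real) \<Rightarrow> real" where
  "cb_expect \<theta> S = (\<Sum>x\<in>UNIV. \<Sum>y\<in>UNIV. S x y * cb_prob \<theta> x y)"

definition cb_mean :: "real^'n \<Rightarrow> real" where
  "cb_mean p = (\<Sum>i\<in>UNIV. p$i) / real CARD('n)"

text \<open>Total correlation; conv is the arbitrary convention used when mu is 0 or 1.\<close>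
definition total_corr ::
  "((real^'n) \<times> (real^'n) \<Rightarrow> real) \<Rightarrow> (real^'n) \<times> (real^'n) \<Rightarrow> real" where
  "total_corr conv \<theta> =
     (let p = fst \<theta>; r = snd \<theta>; \<mu> = cb_mean p in
      if 0 < \<mu> \<and> \<mu> < 1 then
        1 - (\<Sum>i\<in>UNIV. (1 - r$i) * p$i * (1 - p$i)) / (real CARD('n) * \<mu> * (1 - \<mu>))
      else conv \<theta>)"

text \<open>Nondegenerate: Theta \<inter> R^o has an interior point relative to R^o = {(p,0)}.\<close>
definition nondegenerate :: "((real^'n) \<times> (real^'n)) set \<Rightarrow> bool" where
  "nondegenerate \<Theta> \<longleftrightarrow> interior {p. (p, 0) \<in> \<Theta>} \<noteq> {}"

end

theory Submission
  imports Defs "HOL-Computational_Algebra.Polynomial"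
begin

theorem theorem5:
  fixes \<Theta> :: "((real^'n) \<times> (real^'n)) set"
    and conv :: "(real^'n) \<times> (real^'n) \<Rightarrow> real"
  assumes "CARD('n) > 1"
    and "\<Theta> \<subseteq> cb_param_space"
    and "nondegenerate \<Theta>"
    and "\<forall>\<theta>. 0 \<le> conv \<theta> \<and> conv \<theta> \<le> 1"
  shows "\<not> (\<exists>S :: ('n \<Rightarrow> bool) \<Rightarrow> ('n \<Rightarrow> bool) \<Rightarrow> real.
             \<forall>\<theta>\<in>\<Theta>. cb_expect \<theta> S = total_corr conv \<theta>)"
proof
  assume "\<exists>S :: ('n \<Rightarrow> bool) \<Rightarrow> ('n \<Rightarrow> bool) \<Rightarrow> real.
             \<forall>\<theta>\<in>\<Theta>. cb_expect \<theta> S = total_corr conv \<theta>"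
  then obtain S :: "('n \<Rightarrow> bool) \<Rightarrow> ('n \<Rightarrow> bool) \<Rightarrow> real"
    where S: "\<And>\<theta>. \<theta>\<in>\<Theta> \<Longrightarrow> cb_expect \<theta> S = total_corr conv \<theta>" by blast
  define n where "n = real CARD('n)"
  have npos: "n > 0" unfolding n_def by simp
  obtain c where c: "c \<in> interior {p. (p, 0) \<in> \<Theta>}"
    using assms(3) unfolding nondegenerate_def by blast
  then obtain e where e: "e > 0" "ball c e \<subseteq> {p. (p, 0) \<in> \<Theta>}"
    using mem_interior by blast
  have inpar: "\<And>q. q \<in> ball c e \<Longrightarrow> (\<forall>i. 0 \<le> q$i \<and> q$i \<le> 1)"
  proof -
    fix q assume "q \<in> ball c e"
    then have "(q, 0) \<in> \<Theta>" using e(2) by auto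
    then have "(q, 0) \<in> cb_param_space" using assms(2) by auto
    then show "\<forall>i. 0 \<le> q$i \<and> q$i \<le> 1" unfolding cb_param_space_def by auto
  qed
  have normax: "\<And>i t. norm (t *\<^sub>R axis i (1::real) :: real^'n) = \<bar>t\<bar>"
    by simp
  have cbd: "0 < c$i \<and> c$i < 1" for i
  proof -
    have "c - (e/2) *\<^sub>R axis i 1 \<in> ball c e" "c + (e/2) *\<^sub>R axis i 1 \<in> ball c e"
      using e(1) by (auto simp: dist_norm normax)
    from inpar[OF this(1)] inpar[OF this(2)] have
      "0 \<le> (c - (e/2) *\<^sub>R axis i 1)$i" "(c + (e/2) *\<^sub>R axis i 1)$i \<le> 1" by blast+
    then have "0 \<le> c$i - e/2" "c$i + e/2 \<le> 1" by (auto simp: axis_def)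
    then show ?thesis using e(1) by auto
  qed
  obtain i0 :: 'n where True by blast
  obtain j :: 'n where j: "j \<noteq> i0"
  proof -
    have "UNIV - {i0} \<noteq> {}"
    proof
      assume "UNIV - {i0} = {}"
      then have "(UNIV::'n set) = {i0}" by auto
      then have "CARD('n) = 1" by (metis card.empty card_insert_disjoint empty_iff finite.emptyI One_nat_def)
      then show False using assms(1) by simp
    qed
    then show ?thesis using that by blast
  qed
  define p where "p t = c + t *\<^sub>R axis i0 (1::real)" for t
  have pc: "p t $ i = c$i + (if i = i0 then t else 0)" for t i
    by (simp add: p_def axis_def)
  define \<mu>0 where "\<mu>0 = cb_mean c"
  have sumc: "(\<Sum>i\<in>UNIV. c$i) = n * \<mu>0" unfolding \<mu>0_def cb_mean_def n_def by simp
  have mu0: "0 < \<mu>0" "\<mu>0 < 1"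
  proof -
    have "(\<Sum>i\<in>UNIV. c$i) > 0" using cbd by (intro sum_pos) auto
    then show "0 < \<mu>0" using sumc npos by (simp add: zero_less_mult_iff)
    have "(\<Sum>i\<in>UNIV. c$i) < (\<Sum>i\<in>(UNIV::'n set). 1)" using cbd by (intro sum_strict_mono) auto
    then show "\<mu>0 < 1" using sumc npos unfolding n_def by simp
  qed
  define Mu where "Mu = [:\<mu>0, 1/n:]"
  have hMu: "cb_mean (p t) = poly Mu t" for t
  proof -
    have "(\<Sum>i\<in>UNIV. p t $ i) = (\<Sum>i\<in>UNIV. c$i) + t"
      by (simp add: pc sum.distrib)
    then show ?thesis unfolding cb_mean_def Mu_def using sumc npos n_def
      by (simp add: field_simps)
  qed
  define Pi where "Pi i = [:c$i, if i = i0 then 1 else 0:]" for i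
  have hPi: "poly (Pi i) t = p t $ i" for i t by (simp add: Pi_def pc)
  define QP where "QP = (\<Sum>i\<in>UNIV. Pi i * (1 - Pi i))"
  have hQ: "(\<Sum>i\<in>UNIV. (1 - (0::real^'n)$i) * p t $ i * (1 - p t $ i)) = poly QP t" for t
    by (simp add: QP_def poly_sum hPi)
  define Jp where "Jp a b = (if a \<and> b then [:c$i0,1:]^2 else if \<not>a \<and> \<not>b then [:1-c$i0,-1:]^2
      else [:c$i0,1:]*[:1-c$i0,-1:])" for a b
  have hJ: "poly (Jp a b) t = cb_joint (c$i0 + t) 0 a b" for a b t
    by (simp add: Jp_def cb_joint_def power2_eq_square algebra_simps)
  define R where "R x y = (\<Prod>i\<in>UNIV-{i0}. cb_joint (c$i) 0 (x i) (y i))" for x y :: "'n \<Rightarrow> bool"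
  define EP where "EP = (\<Sum>x\<in>UNIV. \<Sum>y\<in>UNIV. smult (S x y * R x y) (Jp (x i0) (y i0)))"
  have hprob: "cb_prob (p t, 0) x y = cb_joint (c$i0 + t) 0 (x i0) (y i0) * R x y" for t x y
  proof -
    have "cb_prob (p t, 0) x y = cb_joint (p t $ i0) 0 (x i0) (y i0) *
        (\<Prod>i\<in>UNIV-{i0}. cb_joint (p t $ i) 0 (x i) (y i))"
      unfolding cb_prob_def by (simp add: prod.remove)
    also have "(\<Prod>i\<in>UNIV-{i0}. cb_joint (p t $ i) 0 (x i) (y i)) = R x y"
      unfolding R_def by (intro prod.cong) (auto simp: pc)
    finally show ?thesis by (simp add: pc)
  qed
  have hE: "cb_expect (p t, 0) S = poly EP t" for t
    unfolding cb_expect_def EP_def by (simp add: poly_sum hJ hprob mult_ac)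
  define D where "D = EP * smult n (Mu * (1 - Mu)) - (smult n (Mu * (1 - Mu)) - QP)"
  define d where "d = min e (min (n * \<mu>0) (n * (1 - \<mu>0)))"
  have dpos: "d > 0" using e(1) npos mu0 unfolding d_def by simp
  have roots: "{-d<..<d} \<subseteq> {t. poly D t = 0}"
  proof
    fix t assume t: "t \<in> {-d<..<d}"
    have "p t \<in> ball c e" using t unfolding d_def by (auto simp: dist_norm p_def normax)
    then have mem: "(p t, 0) \<in> \<Theta>" using e(2) by auto
    have mt: "poly Mu t = \<mu>0 + t / n" by (simp add: Mu_def)
    have "t / n > - \<mu>0" "t / n < 1 - \<mu>0" using t npos unfolding d_def
      by (auto simp: field_simps)
    then have m01: "0 < poly Mu t" "poly Mu t < 1" using mt by auto
    have "poly EP t = total_corr conv (p t, 0)" using S[OF mem] hE by simp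
    also have "\<dots> = 1 - poly QP t / (n * poly Mu t * (1 - poly Mu t))"
      unfolding total_corr_def Let_def using m01 by (simp add: hMu[symmetric] hQ[symmetric] n_def)
    finally have eq: "poly EP t = 1 - poly QP t / (n * poly Mu t * (1 - poly Mu t))" .
    have nz: "n * poly Mu t * (1 - poly Mu t) \<noteq> 0" using m01 npos by simp
    from eq nz show "t \<in> {t. poly D t = 0}" unfolding D_def
      by (simp add: field_simps)
  qed
  have "D = 0"
  proof (rule ccontr)
    assume "D \<noteq> 0"
    then have "finite {t. poly D t = 0}" by (rule poly_roots_finite)
    with roots have "finite {-d<..<d}" by (rule finite_subset)
    moreover have "-d < d" using dpos by simp
    ultimately show False using infinite_Ioo by blast
  qed
  define t0 where "t0 = - n * \<mu>0"
  have m0: "poly Mu t0 = 0" using npos by (simp add: Mu_def t0_def)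
  have "poly D t0 = poly QP t0" unfolding D_def using m0 by simp
  also have "\<dots> = (\<Sum>i\<in>UNIV. p t0 $ i) - (\<Sum>i\<in>UNIV. (p t0 $ i)^2)"
    unfolding QP_def by (simp add: poly_sum hPi algebra_simps power2_eq_square sum_subtractf)
  also have "(\<Sum>i\<in>UNIV. p t0 $ i) = 0"
    using hMu[of t0] m0 npos unfolding cb_mean_def n_def by simp
  finally have "poly D t0 = - (\<Sum>i\<in>UNIV. (p t0 $ i)^2)" by simp
  moreover have "(p t0 $ j)^2 \<le> (\<Sum>i\<in>UNIV. (p t0 $ i)^2)"
    by (rule member_le_sum) auto
  moreover have "(p t0 $ j)^2 > 0" using cbd[of j] j by (simp add: pc)
  ultimately have "poly D t0 < 0" by linarith
  with \<open>D = 0\<close> show False by simp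
qed

end
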